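(* Let $b$ be an extendable solution of length $L$. Then its extension $E(b)$ is an extendable solution of length $L+1$.
   Context: A solution of length $L \ge 1$ is a sequence $(b(0), \dots, b(L-1))$ of integers with $0 \le b(i) < L$ such that for every $0 \le i < L$, $b(i) = |\{ j : 0 \le j < L,\ b(j) = i\}|$. A solution $b$ of length $L$ is extendable if $b(b(0)) = 1$ and $b(i) = 0$ for all $i$ with $b(0) < i < L$. For an extendable solution $b$ of length $L$, its extension $e = E(b)$ is the sequence $(e(0), \dots, e(L))$ of length $L+1$ defined by: $e(0) = b(0) + 1$; $e(b(0)) = 0$; $e(b(0)+1) = 1$; $e(L) = 0$; and $e(i) = b(i)$ for all other $i$. *)

theory Defs
  imports Main
begin

definition is_solution :: "nat list \<Rightarrow> bool" where
  "is_solution b \<longleftrightarrow> length b \<ge> 1 \<and>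
     (\<forall>i < length b. b ! i < length b) \<and>
     (\<forall>i < length b. b ! i = card {j. j < length b \<and> b ! j = i})"

definition extendable :: "nat list \<Rightarrow> bool" where
  "extendable b \<longleftrightarrow> is_solution b \<and>
     b ! (b ! 0) = 1 \<and>
     (\<forall>i. b ! 0 < i \<and> i < length b \<longrightarrow> b ! i = 0)"

text \<open>The extension, of length L+1. Clauses are applied with priority in the
  order listed in the paper (only relevant if indices coincide).\<close>
definition extension :: "nat list \<Rightarrow> nat list" where
  "extension b = map (\<lambda>i.
      if i = 0 then b ! 0 + 1
      else if i = b ! 0 then 0
      else if i = b ! 0 + 1 then 1
      else if i = length b then 0
      else b ! i) [0..<length b + 1]"

end

theory Submission
  imports Defs "HOL-Library.Multiset"
begin

lemma card_cnt: "card {j. j < length xs \<and> xs ! j = v} = count (mset xs) v"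
  using length_filter_conv_card[of "\<lambda>x. v = x" xs] by (simp add: count_mset count_list_eq_length_filter eq_commute[of "xs ! _" v])

lemma count_upd:
  assumes "i < length xs"
  shows "count (mset (xs[i:=x])) v + (if xs!i = v then 1 else 0)
         = count (mset xs) v + (if x = v then 1 else 0)"
proof -
  have m: "xs!i \<in># mset xs" using assms by simp
  have "count (mset xs) (xs!i) \<ge> 1" using m by (simp add: Suc_le_eq)
  then show ?thesis using assms by (auto simp: mset_update)
qed

theorem mainTheorem6:
  fixes b :: "nat list"
  assumes "extendable b"
  shows "extendable (extension b) \<and> length (extension b) = length b + 1"
proof -
  define L where "L = length b"
  define a where "a = b ! 0"
  have L1: "L \<ge> 1" and bnd: "\<And>i. i < L \<Longrightarrow> b!i < L"
    and sol: "\<And>i. i < L \<Longrightarrow> b!i = count (mset b) i"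
    using assms unfolding extendable_def is_solution_def L_def card_cnt by auto
  have ba: "b!a = 1" and tail: "\<And>i. a < i \<Longrightarrow> i < L \<Longrightarrow> b!i = 0"
    using assms unfolding extendable_def L_def a_def by auto
  have aL: "a < L" using bnd L1 unfolding a_def by auto
  have a0: "a \<noteq> 0"
  proof
    assume "a = 0"
    then have "count (mset b) 0 = 0" using sol L1 a_def by auto
    moreover have "0 \<in> set b" using \<open>a = 0\<close> L1 a_def L_def
      by (metis less_le_trans nth_mem zero_less_one)
    ultimately show False by simp
  qed
  have a1L: "a + 1 < L"
  proof (rule ccontr)
    assume "\<not> a + 1 < L"
    then have aeq: "a = L - 1" using aL by simp
    have "{j. j < L \<and> b!j = 0} \<subseteq> {..<L} - {0, a}"
      using a0 ba a_def by auto
    then have "card {j. j < L \<and> b!j = 0} \<le> card ({..<L} - {0, a})"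
      by (intro card_mono) auto
    also have "\<dots> = L - 2" using a0 aL by (simp add: card_Diff_subset)
    finally have "count (mset b) 0 \<le> L - 2" using card_cnt[of b 0] L_def by simp
    then have "a \<le> L - 2" using sol[of 0] L1 a_def by simp
    then show False using aeq a0 by simp
  qed
  have ba1: "b!(a+1) = 0" using tail a1L by simp
  define e where "e = b[0 := a+1, a := 0, a+1 := 1] @ [0]"
  have bne: "b \<noteq> []" using L1 L_def by auto
  have a1L': "Suc (b!0) < length b" using a1L L_def a_def by simp
  have ext: "extension b = e"
    unfolding extension_def e_def
    by (rule nth_equalityI) (auto simp: nth_append nth_list_update L_def a_def a1L' a0[unfolded a_def] bne
        simp del: upt_Suc)
  have le: "length e = L + 1" unfolding e_def L_def by simp
  have c1: "count (mset (b[0 := a+1])) v + (if a = v then 1 else 0)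
         = count (mset b) v + (if a+1 = v then 1 else 0)" for v
    using count_upd[of 0 b "a+1" v] L1 a_def[symmetric] L_def by (simp only: length_greater_0_conv bne) simp
  have c2: "count (mset (b[0 := a+1, a := 0])) v + (if 1 = v then 1 else 0)
         = count (mset (b[0 := a+1])) v + (if 0 = v then 1 else 0)" for v
    using count_upd[of a "b[0 := a+1]" 0 v] aL a0 ba unfolding L_def by simp
  have c3: "count (mset (b[0 := a+1, a := 0, a+1 := 1])) v + (if 0 = v then 1 else 0)
         = count (mset (b[0 := a+1, a := 0])) v + (if 1 = v then 1 else 0)" for v
    using count_upd[of "a+1" "b[0 := a+1, a := 0]" 1 v] a1L ba1 unfolding L_def by simp
  have ce: "count (mset e) v + (if a = v then 1 else 0)
      = count (mset b) v + (if a+1 = v then 1 else 0) + (if 0 = v then 1 else 0)" for v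
  proof -
    have ce0: "count (mset e) v = count (mset (b[0 := a+1, a := 0, a+1 := 1])) v + (if 0 = v then 1 else 0)"
      unfolding e_def by simp
    show ?thesis using c1[of v] c2[of v] c3[of v] ce0 by presburger
  qed
  have cbig: "count (mset b) v = 0" if "v \<ge> L" for v
  proof -
    have "v \<notin> set b" using bnd that unfolding L_def by (fastforce simp: in_set_conv_nth)
    then show ?thesis by simp
  qed
  have enth: "e!i = (if i = 0 then a+1 else if i = a then 0 else if i = a+1 then 1
      else if i = L then 0 else b!i)" if "i < L+1" for i
    using that a0 a1L unfolding e_def L_def
    by (auto simp: nth_append nth_list_update)
  have self: "e!i = count (mset e) i" if iL: "i < L+1" for i
  proof -
    consider "i = 0" | "i = a" | "i = a+1" | "i = L" | "i \<noteq> 0 \<and> i \<noteq> a \<and> i \<noteq> a+1 \<and> i < L"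
      using iL by linarith
    then show ?thesis
    proof cases
      case 1 then show ?thesis using ce[of i] enth[OF iL] sol[of 0] L1 a0 a_def by simp
    next
      case 2 then show ?thesis using ce[of i] enth[OF iL] sol[of a] aL a0 ba by (simp del: count_mset_0_iff)
    next
      case 3 then show ?thesis using ce[of i] enth[OF iL] sol[of "a+1"] a1L a0 ba1 by simp
    next
      case 4 then show ?thesis using ce[of i] enth[OF iL] cbig[of L] a1L a0 by simp
    next
      case 5 then show ?thesis using ce[of i] enth[OF iL] sol[of i] by auto
    qed
  qed
  have ebnd: "e!i < L+1" if "i < L+1" for i
    using enth[OF that] bnd[of i] a1L that by auto
  have "is_solution e"
    unfolding is_solution_def using self ebnd card_cnt[of e] le by auto
  moreover have "e ! (e ! 0) = 1" using enth a1L by simp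
  moreover have "\<forall>i. e ! 0 < i \<and> i < length e \<longrightarrow> e ! i = 0"
    using enth tail a1L le by auto
  ultimately show ?thesis unfolding ext extendable_def using le L_def by simp
qed

end
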